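(* Let $(C^\bullet,\partial)$ be a complex of finite-dimensional complex vector spaces of odd length $d=2r-1$ with a chirality operator $\Gamma$, let $\mathcal B=\Gamma\partial+\partial\Gamma$, and let $\mathcal I\subset[0,\infty)$ be an interval. For $j=0,\dots,d$ let $C^j_{\mathcal I}\subset C^j$ be the span of the generalized eigenvectors of the restriction of $\mathcal B^2$ to $C^j$ corresponding to eigenvalues $\lambda$ with $|\lambda|\in\mathcal I$, and let $\partial_{\mathcal I}$ be the restriction of $\partial$ to $C^\bullet_{\mathcal I}$ (which is a subcomplex). If $0\notin\mathcal I$, then the complex $(C^\bullet_{\mathcal I},\partial_{\mathcal I})$ is acyclic.
   Context: A chirality operator is an involution $\Gamma:C^\bullet\to C^\bullet$ with $\Gamma(C^j)=C^{d-j}$ for all $j$. *)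

theory Defs
  imports "HOL-Analysis.Analysis"
begin

text \<open>The total space of the cochain complex is complex^'n (a finite-dimensional
complex vector space with a fixed basis); each basis vector i is homogeneous of
degree deg i.\<close>

definition graded_piece :: "('n::finite \<Rightarrow> nat) \<Rightarrow> nat \<Rightarrow> (complex ^ 'n) set" where
  "graded_piece deg j = {v. \<forall>i. deg i \<noteq> j \<longrightarrow> v $ i = 0}"

definition cspan :: "(complex ^ 'n::finite) set \<Rightarrow> (complex ^ 'n) set" where
  "cspan S = {v. \<exists>F c. finite F \<and> F \<subseteq> S \<and> v = (\<Sum>x\<in>F. c x *s x)}"

definition gen_eigvec :: "complex ^ 'n ^ 'n \<Rightarrow> complex \<Rightarrow> complex ^ 'n \<Rightarrow> bool" where
  "gen_eigvec M lam v \<longleftrightarrow> (\<exists>k. ((\<lambda>x. (M - (\<chi> i j. if i = j then lam else 0)) *v x) ^^ k) v = 0)"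

definition spectral_piece ::
  "('n::finite \<Rightarrow> nat) \<Rightarrow> complex ^ 'n ^ 'n \<Rightarrow> real set \<Rightarrow> nat \<Rightarrow> (complex ^ 'n) set" where
  "spectral_piece deg B I j =
     cspan {v \<in> graded_piece deg j. \<exists>lam. cmod lam \<in> I \<and> gen_eigvec (B ** B) lam v}"

end

theory Submission
  imports Defs
begin

lemma cspan_eq: "cspan S = vec.span S"
  unfolding cspan_def vec.span_explicit by blast

lemma mat_vmul: "(mat c :: complex^'n::finite^'n) *v x = c *s x"
  by (simp add: vec_eq_iff matrix_vector_mult_def mat_def if_distrib if_distribR cong del: if_weak_cong)

lemma mat_comm: "(mat c :: complex^'n::finite^'n) ** M = M ** mat c"
  by (simp add: matrix_eq matrix_vector_mul_assoc[symmetric] mat_vmul vector_scalar_commute)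

lemma mm_radd: "((X::complex^'n::finite^'n) + Y) ** M = X ** M + Y ** M"
  by (simp add: matrix_eq matrix_vector_mul_assoc[symmetric] algebra_simps)

lemma mm_rsub: "((X::complex^'n::finite^'n) - Y) ** M = X ** M - Y ** M"
  by (simp add: matrix_eq matrix_vector_mul_assoc[symmetric] algebra_simps)

lemma mm_lsub: "(M::complex^'n::finite^'n) ** (X - Y) = M ** X - M ** Y"
  by (simp add: matrix_eq matrix_vector_mul_assoc[symmetric] algebra_simps)

lemma gr_sub: "vec.subspace (graded_piece deg j)"
  unfolding vec.subspace_def graded_piece_def by auto

lemma gr_big: "\<forall>i. deg i \<le> d \<Longrightarrow> d < j \<Longrightarrow> v \<in> graded_piece deg j \<Longrightarrow> v = 0"
proof -
  assume a: "\<forall>i. deg i \<le> d" "d < j" "v \<in> graded_piece deg j"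
  have "\<And>i. deg i \<noteq> j" using a(1,2) by (metis not_le)
  then show "v = 0" using a(3) unfolding graded_piece_def by (simp add: vec_eq_iff)
qed

lemma iter_comm:
  assumes "(M::complex^'n::finite^'n) ** N = N ** M"
  shows "((\<lambda>x. N *v x)^^k) (M *v v) = M *v (((\<lambda>x. N *v x)^^k) v)"
  by (induction k) (simp_all add: matrix_vector_mul_assoc assms)

lemma gen_comm:
  assumes "(M::complex^'n::finite^'n) ** A = A ** M" "gen_eigvec A lam v"
  shows "gen_eigvec A lam (M *v v)"
proof -
  have e: "(\<chi> i j. if i = j then lam else 0) = (mat lam :: complex^'n^'n)" by (simp add: mat_def)
  have c: "M ** (A - mat lam) = (A - mat lam) ** M"
    by (simp add: mm_lsub mm_rsub assms(1) mat_comm)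
  from assms(2) obtain k where "((\<lambda>x. (A - mat lam) *v x) ^^ k) v = 0"
    unfolding gen_eigvec_def e by blast
  then show ?thesis unfolding gen_eigvec_def e using iter_comm[OF c, of k v] by auto
qed

lemma span_map:
  assumes "\<forall>v\<in>S. (M::complex^'n::finite^'n) *v v \<in> vec.span T" "v \<in> vec.span S"
  shows "M *v v \<in> vec.span T"
proof -
  from assms(2) obtain t r where v: "v = (\<Sum>a\<in>t. r a *s a)" "finite t" "t \<subseteq> S"
    unfolding vec.span_explicit by blast
  have "M *v v = (\<Sum>a\<in>t. r a *s (M *v a))"
    unfolding v(1) vec.sum vec.scale by simp
  also have "\<dots> \<in> vec.span T"
    using v(3) assms(1) by (intro vec.span_sum vec.span_scale) auto
  finally show ?thesis .
qed

lemma sp_map: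
  assumes "M ** (B ** B) = (B ** B) ** M"
    "\<forall>v. v \<in> graded_piece deg j \<longrightarrow> M *v v \<in> graded_piece deg j'"
    "v \<in> spectral_piece deg B I j"
  shows "M *v v \<in> spectral_piece deg B I j'"
  using assms(3) unfolding spectral_piece_def cspan_eq
  apply (rule span_map[rotated])
  using assms(1,2) gen_comm by (blast intro: vec.span_base)

lemma sp_gr: "spectral_piece deg B I j \<subseteq> graded_piece deg j"
  unfolding spectral_piece_def cspan_eq
  by (rule vec.span_minimal[OF _ gr_sub]) auto

definition good :: "('n::finite \<Rightarrow> nat) \<Rightarrow> complex^'n^'n \<Rightarrow> complex^'n^'n \<Rightarrow> bool" where
  "good deg A X \<longleftrightarrow> (\<forall>M. M ** A = A ** M \<longrightarrow> X ** M = M ** X) \<and>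
     (\<forall>j v. v \<in> graded_piece deg j \<longrightarrow> X *v v \<in> graded_piece deg j)"

lemma good_mat: "good deg A (mat c)"
  unfolding good_def using mat_comm mat_vmul vec.subspace_scale[OF gr_sub] by metis

lemma good_A: "\<forall>j v. v \<in> graded_piece deg j \<longrightarrow> A *v v \<in> graded_piece deg j \<Longrightarrow> good deg A A"
  unfolding good_def by auto

lemma good_add: "good deg A X \<Longrightarrow> good deg A Y \<Longrightarrow> good deg A (X + Y)"
  unfolding good_def by (simp add: mm_radd matrix_add_ldistrib matrix_vector_mult_add_rdistrib vec.subspace_add[OF gr_sub])

lemma good_sub: "good deg A X \<Longrightarrow> good deg A Y \<Longrightarrow> good deg A (X - Y)"
  unfolding good_def by (simp add: mm_rsub mm_lsub matrix_vector_mult_diff_rdistrib vec.subspace_diff[OF gr_sub])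

lemma good_mul: "good deg A X \<Longrightarrow> good deg A Y \<Longrightarrow> good deg A (X ** Y)"
  unfolding good_def by (metis matrix_mul_assoc matrix_vector_mul_assoc)

lemma prod_form:
  "(mat c' - A ** S) ** (mat c - A ** R) =
     mat (c' * c) - (A::complex^'n::finite^'n) ** (mat c' ** R + mat c ** S - S ** (A ** R))"
  by (simp add: matrix_eq matrix_vector_mul_assoc[symmetric] algebra_simps mat_vmul
       vector_scalar_commute vector_ssub_ldistrib vector_smult_assoc matrix_vector_right_distrib)

lemma iter_form:
  assumes "good deg A A" "lam \<noteq> 0"
  shows "\<exists>c S. c \<noteq> 0 \<and> good deg A S \<and>
    (\<forall>y. ((\<lambda>x. (A - mat lam) *v x)^^k) y = (mat c - A ** S) *v y)"
proof (induction k)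
  case 0
  show ?case by (rule exI[of _ 1], rule exI[of _ 0]) (simp add: good_mat[of deg A 0, simplified])
next
  case (Suc k)
  then obtain c S where cS: "c \<noteq> 0" "good deg A S"
    "\<forall>y. ((\<lambda>x. (A - mat lam) *v x)^^k) y = (mat c - A ** S) *v y" by blast
  have e: "A - mat lam = mat (-lam) - A ** mat (-1)"
    by (simp add: matrix_eq matrix_vector_mul_assoc[symmetric] algebra_simps mat_vmul
       vector_scalar_commute vector_ssub_ldistrib) (simp add: vec_eq_iff vec.neg)
  have "\<forall>y. ((\<lambda>x. (A - mat lam) *v x)^^Suc k) y =
     (mat (-lam * c) - A ** (mat (-lam) ** S + mat c ** mat (-1) - mat (-1) ** (A ** S))) *v y"
    using cS(3) by (simp add: matrix_vector_mul_assoc e prod_form)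
  moreover have "good deg A (mat (-lam) ** S + mat c ** mat (-1) - mat (-1) ** (A ** S))"
    by (intro good_add good_sub good_mul good_mat cS(2) assms)
  moreover have "-lam * c \<noteq> 0" using assms(2) cS(1) by simp
  ultimately show ?case by blast
qed

lemma annihilate:
  assumes "good deg A A" "finite F"
    "\<forall>x\<in>F. \<exists>lam k. lam \<noteq> 0 \<and> ((\<lambda>x. (A - mat lam) *v x)^^k) x = 0"
  shows "\<exists>c R. c \<noteq> 0 \<and> good deg A R \<and> (\<forall>x\<in>F. (mat c - A ** R) *v x = 0)"
  using assms(2,3)
proof (induction F rule: finite_induct)
  case empty
  show ?case by (rule exI[of _ 1], rule exI[of _ 0]) (simp add: good_mat[of deg A 0, simplified])
next
  case (insert u F)
  then obtain c R where cR: "c \<noteq> 0" "good deg A R" "\<forall>x\<in>F. (mat c - A ** R) *v x = 0" by auto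
  from insert(4) obtain lam k where lk: "lam \<noteq> 0" "((\<lambda>x. (A - mat lam) *v x)^^k) u = 0" by auto
  from iter_form[OF assms(1) lk(1), of k] obtain c' S where cS: "c' \<noteq> 0" "good deg A S"
    "\<forall>y. ((\<lambda>x. (A - mat lam) *v x)^^k) y = (mat c' - A ** S) *v y" by blast
  have Qg: "good deg A (mat c - A ** R)" by (intro good_sub good_mul good_mat cR(2) assms(1))
  have Pg: "good deg A (mat c' - A ** S)" by (intro good_sub good_mul good_mat cS(2) assms(1))
  have comm: "(mat c' - A ** S) ** (mat c - A ** R) = (mat c - A ** R) ** (mat c' - A ** S)"
    using Qg Pg unfolding good_def by metis
  have Pu: "(mat c' - A ** S) *v u = 0" using cS(3) lk(2) by metis
  have "\<forall>x\<in>insert u F. (mat (c' * c) - A ** (mat c' ** R + mat c ** S - S ** (A ** R))) *v x = 0"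
    unfolding prod_form[symmetric]
  proof
    fix x assume "x \<in> insert u F"
    then show "((mat c' - A ** S) ** (mat c - A ** R)) *v x = 0"
    proof
      assume "x = u"
      then show ?thesis unfolding comm matrix_vector_mul_assoc[symmetric] using Pu by simp
    next
      assume "x \<in> F"
      then show ?thesis using cR(3) unfolding matrix_vector_mul_assoc[symmetric] by simp
    qed
  qed
  moreover have "good deg A (mat c' ** R + mat c ** S - S ** (A ** R))"
    by (intro good_add good_sub good_mul good_mat cS(2) cR(2) assms(1))
  moreover have "c' * c \<noteq> 0" using cR(1) cS(1) by simp
  ultimately show ?case by blast
qed

theorem lemma5p5:
  fixes deg :: "'n::finite \<Rightarrow> nat"
    and D G :: "complex ^ 'n ^ 'n"
    and d r :: nat
    and I :: "real set"
  assumes odd_len: "r \<ge> 1" "d = 2 * r - 1"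
    and deg_le: "\<forall>i. deg i \<le> d"
    and D_deg: "\<forall>j v. v \<in> graded_piece deg j \<longrightarrow> D *v v \<in> graded_piece deg (j + 1)"
    and D_sq: "D ** D = 0"
    and G_inv: "G ** G = mat 1"
    and G_deg: "\<forall>j v. j \<le> d \<longrightarrow> v \<in> graded_piece deg j \<longrightarrow> G *v v \<in> graded_piece deg (d - j)"
    and I_int: "is_interval I" and I_nonneg: "I \<subseteq> {0..}"
    and zero_notin: "0 \<notin> I"
  shows "(\<forall>j v. v \<in> spectral_piece deg (G ** D + D ** G) I j \<longrightarrow>
             D *v v \<in> spectral_piece deg (G ** D + D ** G) I (j + 1))
       \<and> (\<forall>j \<le> d. \<forall>v \<in> spectral_piece deg (G ** D + D ** G) I j.
             D *v v = 0 \<longrightarrow>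
             (if j = 0 then v = 0
              else (\<exists>w \<in> spectral_piece deg (G ** D + D ** G) I (j - 1). D *v w = v)))"
proof -
  let ?B = "G ** D + D ** G"
  let ?A = "?B ** ?B"
  let ?K = "G ** D ** G"
  have DD: "\<And>z. D *v (D *v z) = 0"
    by (simp add: matrix_vector_mul_assoc D_sq)
  have GG: "\<And>z. G *v (G *v z) = z"
    by (simp add: matrix_vector_mul_assoc G_inv)
  have Kv: "\<And>x. ?K *v x = G *v (D *v (G *v x))"
    by (simp add: matrix_vector_mul_assoc[symmetric])
  have Bv: "\<And>x. ?B *v x = G *v (D *v x) + D *v (G *v x)"
    by (simp add: matrix_vector_mul_assoc[symmetric] matrix_vector_mult_add_rdistrib)
  have Av: "\<And>x. ?A *v x = G *v (D *v (G *v (D *v x))) + D *v (G *v (D *v (G *v x)))"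
  proof -
    fix x
    have "?A *v x = ?B *v (?B *v x)" by (simp add: matrix_vector_mul_assoc)
    also have "\<dots> = G *v (D *v (G *v (D *v x))) + D *v (G *v (D *v (G *v x)))"
      unfolding Bv by (simp add: matrix_vector_right_distrib DD GG)
    finally show "?A *v x = G *v (D *v (G *v (D *v x))) + D *v (G *v (D *v (G *v x)))" .
  qed
  have AKD: "\<And>x. ?A *v x = ?K *v (D *v x) + D *v (?K *v x)"
    unfolding Av Kv ..
  have DA: "D ** ?A = ?A ** D"
  proof (unfold matrix_eq, rule allI)
    fix x
    have e1: "(D ** ?A) *v x = D *v (?A *v x)" by (simp only: matrix_vector_mul_assoc)
    have e2: "(?A ** D) *v x = ?A *v (D *v x)" by (simp only: matrix_vector_mul_assoc)
    show "(D ** ?A) *v x = (?A ** D) *v x"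
      unfolding e1 e2 Av
      by (simp add: matrix_vector_right_distrib DD GG)
  qed
  have KA: "?K ** ?A = ?A ** ?K"
  proof (unfold matrix_eq, rule allI)
    fix x
    have e1: "(?K ** ?A) *v x = ?K *v (?A *v x)" by (simp only: matrix_vector_mul_assoc)
    have e2: "(?A ** ?K) *v x = ?A *v (?K *v x)" by (simp only: matrix_vector_mul_assoc)
    show "(?K ** ?A) *v x = (?A ** ?K) *v x"
      unfolding e1 e2 Av Kv
      by (simp add: matrix_vector_right_distrib DD GG)
  qed
  have zero: "\<And>j v. d < j \<Longrightarrow> v \<in> graded_piece deg j \<Longrightarrow> v = 0"
    using gr_big[OF deg_le] by blast
  have z0: "\<And>j. 0 \<in> graded_piece deg j" by (simp add: graded_piece_def)
  have Dg: "\<And>j v. v \<in> graded_piece deg j \<Longrightarrow> D *v v \<in> graded_piece deg (j + 1)"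
    using D_deg by blast
  have Gg: "\<And>j v. v \<in> graded_piece deg j \<Longrightarrow> G *v v \<in> graded_piece deg (d - j)"
  proof -
    fix j v assume v: "v \<in> graded_piece deg j"
    show "G *v v \<in> graded_piece deg (d - j)"
    proof (cases "j \<le> d")
      case True then show ?thesis using G_deg v by blast
    next
      case False then have "v = 0" using zero v by (meson not_le)
      then show ?thesis using z0 by simp
    qed
  qed
  have Ag: "\<forall>j v. v \<in> graded_piece deg j \<longrightarrow> ?A *v v \<in> graded_piece deg j"
  proof (intro allI impI)
    fix j v assume v: "v \<in> graded_piece deg j"
    have 1: "G *v (D *v (G *v (D *v v))) \<in> graded_piece deg j"
    proof (cases "j + 1 \<le> d")
      case True
      have "G *v (D *v (G *v (D *v v))) \<in> graded_piece deg (d - (d - (j + 1) + 1))"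
        by (intro Gg Dg v)
      moreover have "d - (d - (j + 1) + 1) = j" using True by simp
      ultimately show ?thesis by simp
    next
      case False
      then have "D *v v = 0" using zero Dg[OF v] by (meson not_le)
      then show ?thesis using z0 by simp
    qed
    have 2: "D *v (G *v (D *v (G *v v))) \<in> graded_piece deg j"
    proof (cases "1 \<le> j \<and> j \<le> d")
      case True
      have "D *v (G *v (D *v (G *v v))) \<in> graded_piece deg (d - (d - j + 1) + 1)"
        by (intro Gg Dg v)
      moreover have "d - (d - j + 1) + 1 = j" using True by simp
      ultimately show ?thesis by simp
    next
      case False
      show ?thesis
      proof (cases "j \<le> d")
        case True
        then have "j = 0" using False by simp
        then have "D *v (G *v v) \<in> graded_piece deg (d + 1)" using Dg Gg v by fastforce
        then have "D *v (G *v v) = 0" using zero[of "d + 1"] by simp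
        then show ?thesis using z0 by simp
      next
        case False
        then have "v = 0" using zero v by (meson not_le)
        then show ?thesis using z0 by simp
      qed
    qed
    show "?A *v v \<in> graded_piece deg j"
      unfolding Av using 1 2 vec.subspace_add[OF gr_sub] by blast
  qed
  have goodA: "good deg ?A ?A" by (rule good_A[OF Ag])
  have Kg: "\<And>j v. 1 \<le> j \<Longrightarrow> v \<in> graded_piece deg j \<Longrightarrow> ?K *v v \<in> graded_piece deg (j - 1)"
  proof -
    fix j v assume j: "1 \<le> j" and v: "v \<in> graded_piece deg j"
    show "?K *v v \<in> graded_piece deg (j - 1)"
    proof (cases "j \<le> d")
      case True
      have "?K *v v \<in> graded_piece deg (d - (d - j + 1))"
        unfolding Kv by (intro Gg Dg v)
      moreover have "d - (d - j + 1) = j - 1" using True j by simp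
      ultimately show ?thesis by simp
    next
      case False
      then have "v = 0" using zero v by (meson not_le)
      then show ?thesis using z0 by simp
    qed
  qed
  have K0: "\<And>v. v \<in> graded_piece deg 0 \<Longrightarrow> ?K *v v = 0"
  proof -
    fix v assume v: "v \<in> graded_piece deg 0"
    have "D *v (G *v v) \<in> graded_piece deg (d + 1)" using Dg Gg v by fastforce
    then have "D *v (G *v v) = 0" using zero[of "d + 1"] by simp
    then show "?K *v v = 0" unfolding Kv by simp
  qed
  have part1: "\<forall>j v. v \<in> spectral_piece deg ?B I j \<longrightarrow> D *v v \<in> spectral_piece deg ?B I (j + 1)"
    using sp_map[OF DA] Dg by blast
  have part2: "\<forall>j \<le> d. \<forall>v \<in> spectral_piece deg ?B I j. D *v v = 0 \<longrightarrow>
             (if j = 0 then v = 0 else (\<exists>w \<in> spectral_piece deg ?B I (j - 1). D *v w = v))"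
  proof (intro allI impI ballI)
    fix j v assume j: "j \<le> d" and v: "v \<in> spectral_piece deg ?B I j" and Dv: "D *v v = 0"
    let ?S = "{v \<in> graded_piece deg j. \<exists>lam. cmod lam \<in> I \<and> gen_eigvec ?A lam v}"
    from v obtain t rr where t: "v = (\<Sum>a\<in>t. rr a *s a)" "finite t" "t \<subseteq> ?S"
      unfolding spectral_piece_def cspan_eq vec.span_explicit by blast
    have "\<forall>x\<in>t. \<exists>lam k. lam \<noteq> 0 \<and> ((\<lambda>x. (?A - mat lam) *v x)^^k) x = 0"
    proof
      fix x assume "x \<in> t"
      then obtain lam where lam: "cmod lam \<in> I" "gen_eigvec ?A lam x" using t(3) by blast
      have "lam \<noteq> 0" using lam(1) zero_notin by auto
      moreover have e: "(\<chi> i j. if i = j then lam else 0) = (mat lam :: complex^'n^'n)"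
        by (simp add: mat_def)
      ultimately show "\<exists>lam k. lam \<noteq> 0 \<and> ((\<lambda>x. (?A - mat lam) *v x)^^k) x = 0"
        using lam(2) unfolding gen_eigvec_def e by blast
    qed
    from annihilate[OF goodA t(2) this] obtain c R where cR: "c \<noteq> 0" "good deg ?A R"
      "\<forall>x\<in>t. (mat c - ?A ** R) *v x = 0" by blast
    have "(mat c - ?A ** R) *v v = 0"
      unfolding t(1) vec.sum vec.scale using cR(3) by simp
    then have cv: "c *s v = ?A *v (R *v v)"
      by (simp add: matrix_vector_mult_diff_rdistrib mat_vmul matrix_vector_mul_assoc)
    have Rc: "\<forall>M. M ** ?A = ?A ** M \<longrightarrow> R ** M = M ** R" using cR(2) unfolding good_def by blast
    have RD: "R ** D = D ** R" using Rc DA by blast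
    have RA: "R ** ?A = ?A ** R" using Rc by blast
    have DR: "D *v (R *v v) = 0"
      by (simp add: matrix_vector_mul_assoc RD[symmetric]) (simp add: matrix_vector_mul_assoc[symmetric] Dv)
    have Rv: "R *v v \<in> spectral_piece deg ?B I j"
      using sp_map[OF RA _ v] cR(2) unfolding good_def by blast
    have key: "D *v (?K *v (R *v v)) = c *s v"
      using AKD[of "R *v v"] unfolding DR cv by simp
    show "if j = 0 then v = 0 else (\<exists>w \<in> spectral_piece deg ?B I (j - 1). D *v w = v)"
    proof (cases "j = 0")
      case True
      have "R *v v \<in> graded_piece deg 0" using Rv sp_gr True by blast
      then have "c *s v = 0" using key K0 by simp
      then have "v = 0" using cR(1) by (simp add: vec_eq_iff)
      then show ?thesis using True by simp
    next
      case False
      have "?K *v (R *v v) \<in> spectral_piece deg ?B I (j - 1)"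
        using sp_map[OF KA _ Rv] Kg False by simp
      then have "inverse c *s (?K *v (R *v v)) \<in> spectral_piece deg ?B I (j - 1)"
        unfolding spectral_piece_def cspan_eq by (rule vec.span_scale)
      moreover have "D *v (inverse c *s (?K *v (R *v v))) = v"
        using cR(1) by (simp add: vector_scalar_commute key vector_smult_assoc)
      ultimately have "\<exists>w\<in>spectral_piece deg ?B I (j - 1). D *v w = v" by blast
      then show ?thesis using False by (simp only: if_False simp_thms)
    qed
  qed
  show ?thesis using part1 part2 by blast
qed

end
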